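(* Let $G$ be a finite group. Then the width of $G$ is equal to the number of conjugacy classes of meet-irreducible subgroups of $G$. Moreover, choosing one representative $I$ from each conjugacy class of meet-irreducible subgroups of $G$, the set of arrows $\{(I,G)\}$ so obtained is a minimal generating set for the complete transfer system of $G$.
   Context: For a finite group $G$, an arrow is a pair $(H,K)$ of subgroups with $H\leqslant K$; it is an identity arrow if $H=K$. A $G$-transfer system is a set $\mathsf{T}$ of arrows containing all identity arrows and closed under composition ($(H,K),(K,L)\in\mathsf{T}\Rightarrow(H,L)\in\mathsf{T}$), conjugation ($(H,K)\in\mathsf{T}\Rightarrow(gHg^{-1},gKg^{-1})\in\mathsf{T}$) and restriction ($(H,K)\in\mathsf{T}$, $L\leqslant K\Rightarrow(H\cap L,L)\in\mathsf{T}$). For a set $S$ of non-identity arrows, $\langle S\rangle$ is the smallest transfer system containing $S$. A minimal generating set of a transfer system $\mathsf{T}$ is a set $S\subseteq\mathsf{T}$ of non-identity arrows with $\langle S\rangle=\mathsf{T}$ and $\langle S\setminus\{s\}\rangle\neq\mathsf{T}$ for all $s\in S$; all minimal generating sets of $\mathsf{T}$ have the same cardinality, denoted $\mathfrak{m}(\mathsf{T})$. The complete transfer system of $G$ consists of all arrows, and the width of $G$ is $\mathfrak{m}$ of the complete transfer system. A subgroup $H\leqslant G$ is meet-irreducible if it is meet-irreducible in the subgroup lattice: $H\neq G$, and whenever $H=A\cap B$ for subgroups $A,B$, one has $H=A$ or $H=B$. *)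

theory Defs
  imports "HOL-Algebra.Group"
begin

type_synonym 'a arrow = "'a set \<times> 'a set"

definition conjugate :: "('a, 'b) monoid_scheme \<Rightarrow> 'a \<Rightarrow> 'a set \<Rightarrow> 'a set" where
  "conjugate G g H = {g \<otimes>\<^bsub>G\<^esub> h \<otimes>\<^bsub>G\<^esub> inv\<^bsub>G\<^esub> g | h. h \<in> H}"

definition arrows :: "('a, 'b) monoid_scheme \<Rightarrow> 'a arrow set" where
  "arrows G = {(H, K). subgroup H G \<and> subgroup K G \<and> H \<subseteq> K}"

definition transfer_system :: "('a, 'b) monoid_scheme \<Rightarrow> 'a arrow set \<Rightarrow> bool" where
  "transfer_system G T \<longleftrightarrow>
     T \<subseteq> arrows G \<and>
     (\<forall>H. subgroup H G \<longrightarrow> (H, H) \<in> T) \<and>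
     (\<forall>H K L. (H, K) \<in> T \<longrightarrow> (K, L) \<in> T \<longrightarrow> (H, L) \<in> T) \<and>
     (\<forall>H K g. (H, K) \<in> T \<longrightarrow> g \<in> carrier G \<longrightarrow> (conjugate G g H, conjugate G g K) \<in> T) \<and>
     (\<forall>H K L. (H, K) \<in> T \<longrightarrow> subgroup L G \<longrightarrow> L \<subseteq> K \<longrightarrow> (H \<inter> L, L) \<in> T)"

definition generated_ts :: "('a, 'b) monoid_scheme \<Rightarrow> 'a arrow set \<Rightarrow> 'a arrow set" where
  "generated_ts G S = \<Inter> {T. transfer_system G T \<and> S \<subseteq> T}"

definition complete_ts :: "('a, 'b) monoid_scheme \<Rightarrow> 'a arrow set" where
  "complete_ts G = arrows G"

definition minimal_generating_set :: "('a, 'b) monoid_scheme \<Rightarrow> 'a arrow set \<Rightarrow> 'a arrow set \<Rightarrow> bool" where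
  "minimal_generating_set G T S \<longleftrightarrow>
     S \<subseteq> T \<and> (\<forall>s \<in> S. fst s \<noteq> snd s) \<and>
     generated_ts G S = T \<and>
     (\<forall>s \<in> S. generated_ts G (S - {s}) \<noteq> T)"

text \<open>The common cardinality of minimal generating sets (well defined by a result of the paper).\<close>
definition mgen_card :: "('a, 'b) monoid_scheme \<Rightarrow> 'a arrow set \<Rightarrow> nat" where
  "mgen_card G T = card (SOME S. minimal_generating_set G T S)"

definition width :: "('a, 'b) monoid_scheme \<Rightarrow> nat" where
  "width G = mgen_card G (complete_ts G)"

definition meet_irreducible :: "('a, 'b) monoid_scheme \<Rightarrow> 'a set \<Rightarrow> bool" where
  "meet_irreducible G H \<longleftrightarrow>
     subgroup H G \<and> H \<noteq> carrier G \<and>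
     (\<forall>A B. subgroup A G \<longrightarrow> subgroup B G \<longrightarrow> H = A \<inter> B \<longrightarrow> H = A \<or> H = B)"

definition conj_class :: "('a, 'b) monoid_scheme \<Rightarrow> 'a set \<Rightarrow> 'a set set" where
  "conj_class G H = {conjugate G g H | g. g \<in> carrier G}"

end

theory Submission
  imports Defs
begin

context group
begin

lemma conj_eq: "conjugate G g H = (\<lambda>h. g \<otimes> h \<otimes> inv g) ` H"
  by (auto simp: conjugate_def)

lemma conj_subset: "g \<in> carrier G \<Longrightarrow> H \<subseteq> carrier G \<Longrightarrow> conjugate G g H \<subseteq> carrier G"
  by (auto simp: conj_eq)

lemma conj_mono: "A \<subseteq> B \<Longrightarrow> conjugate G g A \<subseteq> conjugate G g B"
  by (auto simp: conj_eq)

lemma conj_comp: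
  assumes "g \<in> carrier G" "h \<in> carrier G" "H \<subseteq> carrier G"
  shows "conjugate G g (conjugate G h H) = conjugate G (g \<otimes> h) H"
  unfolding conj_eq image_image
proof (rule image_cong[OF refl])
  fix x assume "x \<in> H"
  then have x: "x \<in> carrier G" using assms by auto
  show "g \<otimes> (h \<otimes> x \<otimes> inv h) \<otimes> inv g = g \<otimes> h \<otimes> x \<otimes> inv (g \<otimes> h)"
    using assms x by (simp add: inv_mult_group m_assoc)
qed

lemma conj_one: "H \<subseteq> carrier G \<Longrightarrow> conjugate G \<one> H = H"
  unfolding conj_eq by (auto simp: image_iff subsetD)

lemma conj_inv1: "g \<in> carrier G \<Longrightarrow> H \<subseteq> carrier G \<Longrightarrow> conjugate G (inv g) (conjugate G g H) = H"
  by (simp add: conj_comp conj_one)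

lemma conj_inv2: "g \<in> carrier G \<Longrightarrow> H \<subseteq> carrier G \<Longrightarrow> conjugate G g (conjugate G (inv g) H) = H"
  by (simp add: conj_comp conj_one)

lemma conj_inj: "g \<in> carrier G \<Longrightarrow> A \<subseteq> carrier G \<Longrightarrow> B \<subseteq> carrier G \<Longrightarrow> conjugate G g A = conjugate G g B \<Longrightarrow> A = B"
  by (metis conj_inv1)

lemma conj_carrier: "g \<in> carrier G \<Longrightarrow> conjugate G g (carrier G) = carrier G"
proof
  assume g: "g \<in> carrier G"
  show "conjugate G g (carrier G) \<subseteq> carrier G" using g conj_subset by auto
  have "conjugate G (inv g) (carrier G) \<subseteq> carrier G" using g conj_subset by auto
  then have "conjugate G g (conjugate G (inv g) (carrier G)) \<subseteq> conjugate G g (carrier G)"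
    by (rule conj_mono)
  then show "carrier G \<subseteq> conjugate G g (carrier G)" using g conj_inv2 by auto
qed

lemma conj_Int:
  assumes g: "g \<in> carrier G" and A: "A \<subseteq> carrier G" and B: "B \<subseteq> carrier G"
  shows "conjugate G g (A \<inter> B) = conjugate G g A \<inter> conjugate G g B"
  unfolding conj_eq
proof (rule inj_on_image_Int[OF _ A B])
  show "inj_on (\<lambda>h. g \<otimes> h \<otimes> inv g) (carrier G)"
    using g by (auto simp: inj_on_def)
qed

lemma conj_subgroup:
  assumes H: "subgroup H G" and g: "g \<in> carrier G"
  shows "subgroup (conjugate G g H) G"
proof (rule subgroupI)
  have Hc: "H \<subseteq> carrier G" using H subgroup.subset by blast
  show "conjugate G g H \<subseteq> carrier G" using conj_subset[OF g Hc] .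
  show "conjugate G g H \<noteq> {}" using subgroup.one_closed[OF H] by (auto simp: conj_eq)
  fix a assume "a \<in> conjugate G g H"
  then obtain h where h: "h \<in> H" "a = g \<otimes> h \<otimes> inv g" by (auto simp: conj_eq)
  have hc: "h \<in> carrier G" using h Hc by auto
  have "inv a = g \<otimes> inv h \<otimes> inv g"
    using h hc g by (simp add: inv_mult_group m_assoc)
  then show "inv a \<in> conjugate G g H"
    using subgroup.m_inv_closed[OF H h(1)] by (auto simp: conj_eq)
  fix b assume "b \<in> conjugate G g H"
  then obtain k where k: "k \<in> H" "b = g \<otimes> k \<otimes> inv g" by (auto simp: conj_eq)
  have kc: "k \<in> carrier G" using k Hc by auto
  have "a \<otimes> b = g \<otimes> (h \<otimes> k) \<otimes> inv g"
  proof -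
    have c: "inv g \<otimes> (g \<otimes> y) = y" if "y \<in> carrier G" for y
      using g that by (simp add: m_assoc[symmetric])
    show ?thesis using h k hc kc g c[of "k \<otimes> inv g"] by (simp add: m_assoc)
  qed
  then show "a \<otimes> b \<in> conjugate G g H"
    using subgroup.m_closed[OF H h(1) k(1)] by (auto simp: conj_eq)
qed

lemma cc_self: "H \<subseteq> carrier G \<Longrightarrow> H \<in> conj_class G H"
proof -
  assume "H \<subseteq> carrier G"
  then have "H = conjugate G \<one> H" using conj_one by simp
  then show "H \<in> conj_class G H" unfolding conj_class_def using one_closed by blast
qed

lemma cc_mem: "J \<in> conj_class G I \<longleftrightarrow> (\<exists>g \<in> carrier G. J = conjugate G g I)"
  unfolding conj_class_def by auto

lemma cc_trans:
  assumes "J \<in> conj_class G I" "K \<in> conj_class G J" "I \<subseteq> carrier G"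
  shows "K \<in> conj_class G I"
proof -
  obtain g where g: "g \<in> carrier G" "J = conjugate G g I" using assms(1) unfolding conj_class_def by blast
  obtain h where h: "h \<in> carrier G" "K = conjugate G h J" using assms(2) unfolding conj_class_def by blast
  have "K = conjugate G (h \<otimes> g) I" using conj_comp[OF h(1) g(1) assms(3)] g(2) h(2) by simp
  moreover have "h \<otimes> g \<in> carrier G" using g h by simp
  ultimately show ?thesis unfolding conj_class_def by blast
qed

lemma cc_sym:
  assumes "J \<in> conj_class G I" "I \<subseteq> carrier G"
  shows "I \<in> conj_class G J"
proof -
  obtain g where g: "g \<in> carrier G" "J = conjugate G g I" using assms(1) unfolding conj_class_def by blast
  have "I = conjugate G (inv g) J" using conj_inv1[OF g(1) assms(2)] g(2) by simp
  moreover have "inv g \<in> carrier G" using g by simp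
  ultimately show ?thesis unfolding conj_class_def by blast
qed

lemma cc_subset: "J \<in> conj_class G I \<Longrightarrow> I \<subseteq> carrier G \<Longrightarrow> J \<subseteq> carrier G"
  unfolding conj_class_def using conj_subset by blast

lemma cc_eq:
  assumes "J \<in> conj_class G I" "I \<subseteq> carrier G"
  shows "conj_class G J = conj_class G I"
proof (intro equalityI subsetI)
  have Jc: "J \<subseteq> carrier G" using cc_subset[OF assms] .
  fix K
  { assume "K \<in> conj_class G J" then show "K \<in> conj_class G I" using cc_trans[OF assms(1) _ assms(2)] by simp }
  { assume "K \<in> conj_class G I" then show "K \<in> conj_class G J" using cc_trans[OF cc_sym[OF assms] _ Jc] by simp }
qed

lemma meet_irr_subset: "meet_irreducible G I \<Longrightarrow> I \<subseteq> carrier G"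
proof -
  assume "meet_irreducible G I"
  then have "subgroup I G" unfolding meet_irreducible_def by (rule conjunct1)
  then show ?thesis by (rule subgroup.subset)
qed

lemma meet_irr_conj:
  assumes I: "meet_irreducible G I" and g: "g \<in> carrier G"
  shows "meet_irreducible G (conjugate G g I)"
proof -
  have sI: "subgroup I G" and nI: "I \<noteq> carrier G"
    using I unfolding meet_irreducible_def by (rule conjunct1, blast)
  have Ic: "I \<subseteq> carrier G" using sI by (rule subgroup.subset)
  have ig: "inv g \<in> carrier G" using g by simp
  show ?thesis unfolding meet_irreducible_def
  proof (intro conjI allI impI)
    show "subgroup (conjugate G g I) G" using conj_subgroup[OF sI g] .
    show "conjugate G g I \<noteq> carrier G"
      using conj_inj[OF g Ic] conj_carrier[OF g] nI by auto
    fix A B assume A: "subgroup A G" and B: "subgroup B G" and eq: "conjugate G g I = A \<inter> B"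
    have Ac: "A \<subseteq> carrier G" and Bc: "B \<subseteq> carrier G" using subgroup.subset[OF A] subgroup.subset[OF B] by auto
    have "I = conjugate G (inv g) (A \<inter> B)" using eq conj_inv1[OF g Ic] by simp
    also have "\<dots> = conjugate G (inv g) A \<inter> conjugate G (inv g) B"
      using conj_Int[OF ig Ac Bc] .
    finally have Ieq: "I = conjugate G (inv g) A \<inter> conjugate G (inv g) B" .
    have irr: "\<And>A B. subgroup A G \<Longrightarrow> subgroup B G \<Longrightarrow> I = A \<inter> B \<Longrightarrow> I = A \<or> I = B"
      using I unfolding meet_irreducible_def by blast
    have "I = conjugate G (inv g) A \<or> I = conjugate G (inv g) B"
      by (rule irr[OF conj_subgroup[OF A ig] conj_subgroup[OF B ig] Ieq])
    then show "conjugate G g I = A \<or> conjugate G g I = B"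
      using conj_inv2[OF g Ac] conj_inv2[OF g Bc] by auto
  qed
qed

lemma cc_meet_irr: "J \<in> conj_class G I \<Longrightarrow> meet_irreducible G I \<Longrightarrow> meet_irreducible G J"
proof -
  assume "J \<in> conj_class G I" "meet_irreducible G I"
  then obtain g where "g \<in> carrier G" "J = conjugate G g I" unfolding conj_class_def by blast
  then show ?thesis using meet_irr_conj \<open>meet_irreducible G I\<close> by simp
qed

lemma arrows_ts: "transfer_system G (arrows G)"
  unfolding transfer_system_def
proof (intro conjI allI impI)
  fix H K g assume "(H, K) \<in> arrows G" "g \<in> carrier G"
  then show "(conjugate G g H, conjugate G g K) \<in> arrows G"
    unfolding arrows_def using conj_subgroup conj_mono by auto
next
  fix H K L assume "(H, K) \<in> arrows G" "subgroup L G" "L \<subseteq> K"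
  then show "(H \<inter> L, L) \<in> arrows G"
    unfolding arrows_def using subgroups_Inter_pair by auto
qed (auto simp: arrows_def)

lemma ts_Inter:
  assumes ne: "F \<noteq> {}" and ts: "\<And>T. T \<in> F \<Longrightarrow> transfer_system G T"
  shows "transfer_system G (\<Inter>F)"
proof -
  have a1: "\<And>T. T \<in> F \<Longrightarrow> T \<subseteq> arrows G"
    and a2: "\<And>T H. T \<in> F \<Longrightarrow> subgroup H G \<Longrightarrow> (H, H) \<in> T"
    and a3: "\<And>T H K L. T \<in> F \<Longrightarrow> (H, K) \<in> T \<Longrightarrow> (K, L) \<in> T \<Longrightarrow> (H, L) \<in> T"
    and a4: "\<And>T H K g. T \<in> F \<Longrightarrow> (H, K) \<in> T \<Longrightarrow> g \<in> carrier G \<Longrightarrow> (conjugate G g H, conjugate G g K) \<in> T"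
    and a5: "\<And>T H K L. T \<in> F \<Longrightarrow> (H, K) \<in> T \<Longrightarrow> subgroup L G \<Longrightarrow> L \<subseteq> K \<Longrightarrow> (H \<inter> L, L) \<in> T"
    using ts unfolding transfer_system_def by metis+
  obtain T0 where T0: "T0 \<in> F" using ne by auto
  show ?thesis unfolding transfer_system_def
  proof (intro conjI allI impI)
    show "\<Inter>F \<subseteq> arrows G" using a1[OF T0] T0 by auto
    show "\<And>H. subgroup H G \<Longrightarrow> (H, H) \<in> \<Inter>F" using a2 by auto
    show "\<And>H K L. (H, K) \<in> \<Inter>F \<Longrightarrow> (K, L) \<in> \<Inter>F \<Longrightarrow> (H, L) \<in> \<Inter>F"
      using a3 by (meson InterD InterI)
    show "\<And>H K g. (H, K) \<in> \<Inter>F \<Longrightarrow> g \<in> carrier G \<Longrightarrow> (conjugate G g H, conjugate G g K) \<in> \<Inter>F"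
      using a4 by (meson InterD InterI)
    show "\<And>H K L. (H, K) \<in> \<Inter>F \<Longrightarrow> subgroup L G \<Longrightarrow> L \<subseteq> K \<Longrightarrow> (H \<inter> L, L) \<in> \<Inter>F"
      using a5 by (meson InterD InterI)
  qed
qed

lemma gen_ts: "S \<subseteq> arrows G \<Longrightarrow> transfer_system G (generated_ts G S)"
  unfolding generated_ts_def by (rule ts_Inter) (use arrows_ts in auto)

lemma gen_sup: "S \<subseteq> generated_ts G S"
  unfolding generated_ts_def by auto

lemma gen_least: "transfer_system G T \<Longrightarrow> S \<subseteq> T \<Longrightarrow> generated_ts G S \<subseteq> T"
  unfolding generated_ts_def by auto

definition TI :: "'a set \<Rightarrow> 'a arrow set" where
  "TI I = {(H, K). (H, K) \<in> arrows G \<and> (H \<in> conj_class G I \<longrightarrow> H = K)}"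

lemma TI_ts:
  assumes I: "meet_irreducible G I"
  shows "transfer_system G (TI I)"
proof -
  have Ic: "I \<subseteq> carrier G" using I meet_irr_subset by auto
  show ?thesis unfolding transfer_system_def
  proof (intro conjI allI impI)
    show "TI I \<subseteq> arrows G" unfolding TI_def by auto
    fix H assume "subgroup H G" then show "(H, H) \<in> TI I"
      unfolding TI_def arrows_def by auto
  next
    fix H K L assume "(H, K) \<in> TI I" "(K, L) \<in> TI I"
    then show "(H, L) \<in> TI I" unfolding TI_def arrows_def by auto
  next
    fix H K g assume HK: "(H, K) \<in> TI I" and g: "g \<in> carrier G"
    have sH: "subgroup H G" and sK: "subgroup K G" and HK': "H \<subseteq> K"
      and imp: "H \<in> conj_class G I \<longrightarrow> H = K"
      using HK unfolding TI_def arrows_def by auto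
    have Hc: "H \<subseteq> carrier G" using sH subgroup.subset by auto
    have "conjugate G g H \<in> conj_class G I \<longrightarrow> H \<in> conj_class G I"
    proof
      assume "conjugate G g H \<in> conj_class G I"
      moreover have "H \<in> conj_class G (conjugate G g H)"
        unfolding conj_class_def using conj_inv1[OF g Hc] inv_closed[OF g] by blast
      ultimately show "H \<in> conj_class G I" using cc_trans Ic by blast
    qed
    then show "(conjugate G g H, conjugate G g K) \<in> TI I"
      unfolding TI_def arrows_def using conj_subgroup[OF sH g] conj_subgroup[OF sK g]
        conj_mono[OF HK'] imp by auto
  next
    fix H K L assume HK: "(H, K) \<in> TI I" and sL: "subgroup L G" and LK: "L \<subseteq> K"
    have sH: "subgroup H G" and sK: "subgroup K G" and HK': "H \<subseteq> K"
      and imp: "H \<in> conj_class G I \<longrightarrow> H = K"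
      using HK unfolding TI_def arrows_def by auto
    have "H \<inter> L = L" if c: "H \<inter> L \<in> conj_class G I"
    proof -
      have "meet_irreducible G (H \<inter> L)" using cc_meet_irr[OF c I] .
      then have "H \<inter> L = H \<or> H \<inter> L = L" using sH sL unfolding meet_irreducible_def by blast
      then show ?thesis using imp c LK by auto
    qed
    then show "(H \<inter> L, L) \<in> TI I"
      unfolding TI_def arrows_def using subgroups_Inter_pair[OF sH sL] sL by auto
  qed
qed

lemma complete_from:
  assumes fin: "finite (carrier G)" and T: "transfer_system G T"
    and gen: "\<And>J. meet_irreducible G J \<Longrightarrow> \<exists>K. (J, K) \<in> T \<and> J \<noteq> K"
  shows "arrows G \<subseteq> T"
proof -
  have Tar: "T \<subseteq> arrows G" using T unfolding transfer_system_def by auto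
  have id: "\<And>H. subgroup H G \<Longrightarrow> (H, H) \<in> T" using T unfolding transfer_system_def by auto
  have comp: "\<And>H K L. (H, K) \<in> T \<Longrightarrow> (K, L) \<in> T \<Longrightarrow> (H, L) \<in> T"
    using T unfolding transfer_system_def by blast
  have restr: "\<And>H K L. (H, K) \<in> T \<Longrightarrow> subgroup L G \<Longrightarrow> L \<subseteq> K \<Longrightarrow> (H \<inter> L, L) \<in> T"
    using T unfolding transfer_system_def by blast
  have cardlt: "card H < card M" if "H \<subset> M" "M \<subseteq> carrier G" for H M
    using that fin by (meson psubset_card_mono rev_finite_subset)
  have cardle: "card M \<le> card (carrier G)" if "M \<subseteq> carrier G" for M
    using that fin by (simp add: card_mono)
  have main: "\<forall>K. subgroup H G \<longrightarrow> subgroup K G \<longrightarrow> H \<subseteq> K \<longrightarrow> (H, K) \<in> T" for H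
  proof (induct H rule: measure_induct_rule[of "\<lambda>H. card (carrier G) - card H"])
    case (less H)
    show ?case
    proof (intro allI impI)
      fix K assume sH: "subgroup H G" and sK: "subgroup K G" and HK: "H \<subseteq> K"
      have Hc: "H \<subseteq> carrier G" and Kc: "K \<subseteq> carrier G" using sH sK subgroup.subset by auto
      have IH: "\<And>M K'. H \<subset> M \<Longrightarrow> subgroup M G \<Longrightarrow> subgroup K' G \<Longrightarrow> M \<subseteq> K' \<Longrightarrow> (M, K') \<in> T"
      proof -
        fix M K' assume a: "H \<subset> M" "subgroup M G" "subgroup K' G" "M \<subseteq> K'"
        have Mc: "M \<subseteq> carrier G" using a subgroup.subset by auto
        have "card (carrier G) - card M < card (carrier G) - card H"
          using cardlt[OF a(1) Mc] cardle[OF Mc] by linarith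
        then show "(M, K') \<in> T" using less a by blast
      qed
      show "(H, K) \<in> T"
      proof (cases "H = K")
        case True then show ?thesis using id sH by auto
      next
        case False
        then have nH: "H \<noteq> carrier G" using HK Kc by auto
        show ?thesis
        proof (cases "meet_irreducible G H")
          case True
          then obtain K0 where K0: "(H, K0) \<in> T" "H \<noteq> K0" using gen by blast
          have sK0: "subgroup K0 G" and HK0: "H \<subseteq> K0" using K0 Tar unfolding arrows_def by auto
          define M where "M = K0 \<inter> K"
          have sM: "subgroup M G" unfolding M_def using subgroups_Inter_pair[OF sK0 sK] .
          have "(H \<inter> M, M) \<in> T" using restr[OF K0(1) sM] M_def by auto
          moreover have "H \<inter> M = H" using HK HK0 M_def by auto
          ultimately have HM: "(H, M) \<in> T" by simp
          have "H \<noteq> M" using True sK0 sK K0(2) False unfolding meet_irreducible_def M_def by blast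
          then have "H \<subset> M" using HK HK0 M_def by auto
          then have "(M, K) \<in> T" using IH sM sK M_def by auto
          then show ?thesis using comp HM by blast
        next
          case nmi: False
          then obtain A B where A: "subgroup A G" and B: "subgroup B G" and eq: "H = A \<inter> B"
            and nA: "H \<noteq> A" and nB: "H \<noteq> B"
            using sH nH unfolding meet_irreducible_def by blast
          have sG: "subgroup (carrier G) G" by (rule subgroup_self)
          have Ac: "A \<subseteq> carrier G" and Bc: "B \<subseteq> carrier G" using subgroup.subset[OF A] subgroup.subset[OF B] by auto
          have "(A, carrier G) \<in> T" using IH[OF _ A sG Ac] eq nA by auto
          then have AK: "(A \<inter> K, K) \<in> T" using restr sK Kc by blast
          have "(B, carrier G) \<in> T" using IH[OF _ B sG Bc] eq nB by auto
          moreover have sAK: "subgroup (A \<inter> K) G" using subgroups_Inter_pair[OF A sK] .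
          ultimately have "(B \<inter> (A \<inter> K), A \<inter> K) \<in> T" using restr subgroup.subset by blast
          moreover have "B \<inter> (A \<inter> K) = H" using eq HK by auto
          ultimately show ?thesis using comp AK by auto
        qed
      qed
    qed
  qed
  show ?thesis unfolding arrows_def using main by auto
qed

lemma crit:
  assumes fin: "finite (carrier G)" and X: "X \<subseteq> arrows G"
  shows "generated_ts G X = arrows G \<longleftrightarrow>
    (\<forall>I. meet_irreducible G I \<longrightarrow> (\<exists>H K. (H, K) \<in> X \<and> H \<in> conj_class G I \<and> H \<noteq> K))"
proof
  assume eq: "generated_ts G X = arrows G"
  show "\<forall>I. meet_irreducible G I \<longrightarrow> (\<exists>H K. (H, K) \<in> X \<and> H \<in> conj_class G I \<and> H \<noteq> K)"
  proof (intro allI impI, rule ccontr)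
    fix I assume I: "meet_irreducible G I"
      and no: "\<not> (\<exists>H K. (H, K) \<in> X \<and> H \<in> conj_class G I \<and> H \<noteq> K)"
    have "X \<subseteq> TI I" using X no unfolding TI_def by auto
    then have "generated_ts G X \<subseteq> TI I" using gen_least TI_ts[OF I] by auto
    moreover have "(I, carrier G) \<in> arrows G"
      using I subgroup_self meet_irr_subset unfolding arrows_def meet_irreducible_def by auto
    moreover have "(I, carrier G) \<notin> TI I"
      using I cc_self meet_irr_subset unfolding TI_def meet_irreducible_def by auto
    ultimately show False using eq by auto
  qed
next
  assume h: "\<forall>I. meet_irreducible G I \<longrightarrow> (\<exists>H K. (H, K) \<in> X \<and> H \<in> conj_class G I \<and> H \<noteq> K)"
  let ?T = "generated_ts G X"
  have T: "transfer_system G ?T" using gen_ts[OF X] .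
  have "arrows G \<subseteq> ?T"
  proof (rule complete_from[OF fin T])
    fix J assume J: "meet_irreducible G J"
    then obtain H K where HK: "(H, K) \<in> X" "H \<in> conj_class G J" "H \<noteq> K" using h by blast
    obtain g where g: "g \<in> carrier G" "H = conjugate G g J" using HK(2) unfolding conj_class_def by blast
    have Jc: "J \<subseteq> carrier G" using J meet_irr_subset by auto
    have Kc: "K \<subseteq> carrier G" using HK(1) X unfolding arrows_def using subgroup.subset by auto
    have "(H, K) \<in> ?T" using HK(1) gen_sup by auto
    then have "(conjugate G (inv g) H, conjugate G (inv g) K) \<in> ?T"
      using T g unfolding transfer_system_def by (meson inv_closed)
    moreover have "conjugate G (inv g) H = J" using g conj_inv1 Jc by simp
    moreover have "J \<noteq> conjugate G (inv g) K"
      using g HK(3) conj_inv2[OF g(1) Kc] by auto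
    ultimately show "\<exists>K. (J, K) \<in> ?T \<and> J \<noteq> K" by auto
  qed
  moreover have "?T \<subseteq> arrows G" using T unfolding transfer_system_def by auto
  ultimately show "?T = arrows G" by auto
qed

lemma part2:
  assumes fin: "finite (carrier G)" and R: "R \<subseteq> {H. meet_irreducible G H}"
    and uniq: "\<forall>H. meet_irreducible G H \<longrightarrow> (\<exists>!I. I \<in> R \<and> I \<in> conj_class G H)"
  shows "minimal_generating_set G (complete_ts G) ((\<lambda>I. (I, carrier G)) ` R)"
proof -
  let ?S = "(\<lambda>I. (I, carrier G)) ` R"
  have mi: "\<And>I. I \<in> R \<Longrightarrow> meet_irreducible G I" using R by auto
  have Sar: "?S \<subseteq> arrows G"
  proof
    fix s assume "s \<in> ?S"
    then obtain I where I: "I \<in> R" "s = (I, carrier G)" by auto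
    have "subgroup I G" using mi[OF I(1)] unfolding meet_irreducible_def by blast
    then show "s \<in> arrows G" using I(2) subgroup_self meet_irr_subset[OF mi[OF I(1)]]
      unfolding arrows_def by auto
  qed
  have nid: "\<forall>s \<in> ?S. fst s \<noteq> snd s"
    using mi unfolding meet_irreducible_def by auto
  have gen: "generated_ts G ?S = arrows G"
    unfolding crit[OF fin Sar]
  proof (intro allI impI)
    fix I assume I: "meet_irreducible G I"
    then obtain J where J: "J \<in> R" "J \<in> conj_class G I" using uniq by blast
    have "J \<noteq> carrier G" using mi[OF J(1)] unfolding meet_irreducible_def by blast
    then show "\<exists>H K. (H, K) \<in> ?S \<and> H \<in> conj_class G I \<and> H \<noteq> K" using J by blast
  qed
  have minl: "\<forall>s \<in> ?S. generated_ts G (?S - {s}) \<noteq> arrows G"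
  proof (intro ballI notI)
    fix s assume s: "s \<in> ?S" and eq: "generated_ts G (?S - {s}) = arrows G"
    then obtain I where I: "I \<in> R" "s = (I, carrier G)" by auto
    have sub: "?S - {s} \<subseteq> arrows G" using Sar by auto
    obtain H K where HK: "(H, K) \<in> ?S - {s}" "H \<in> conj_class G I"
      using eq[unfolded crit[OF fin sub]] mi[OF I(1)] by blast
    then obtain J where J: "J \<in> R" "H = J" "J \<noteq> I" using I(2) by auto
    have "I \<in> conj_class G I" using cc_self meet_irr_subset[OF mi[OF I(1)]] by auto
    then have "J = I" using uniq mi[OF I(1)] I(1) J HK(2) by blast
    then show False using J(3) by simp
  qed
  show ?thesis unfolding minimal_generating_set_def complete_ts_def
    using Sar nid gen minl by blast
qed

lemma mgs_card:
  assumes fin: "finite (carrier G)" and S: "minimal_generating_set G (complete_ts G) S"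
  shows "card S = card (conj_class G ` {H. meet_irreducible G H})"
proof -
  have Sar: "S \<subseteq> arrows G" and nid: "\<forall>s \<in> S. fst s \<noteq> snd s"
    and gen: "generated_ts G S = arrows G"
    and minl: "\<forall>s \<in> S. generated_ts G (S - {s}) \<noteq> arrows G"
    using S unfolding minimal_generating_set_def complete_ts_def by auto
  have A: "\<And>I. meet_irreducible G I \<Longrightarrow> \<exists>H K. (H, K) \<in> S \<and> H \<in> conj_class G I \<and> H \<noteq> K"
    using gen[unfolded crit[OF fin Sar]] by blast
  have Hc: "\<And>H K. (H, K) \<in> S \<Longrightarrow> H \<subseteq> carrier G"
    using Sar unfolding arrows_def using subgroup.subset by blast
  have claim: "meet_irreducible G (fst s) \<and>
      (\<forall>s' \<in> S. conj_class G (fst s') = conj_class G (fst s) \<longrightarrow> s' = s)" if s: "s \<in> S" for s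
  proof -
    have sub: "S - {s} \<subseteq> arrows G" using Sar by auto
    obtain I where I: "meet_irreducible G I"
      and no: "\<not> (\<exists>H K. (H, K) \<in> S - {s} \<and> H \<in> conj_class G I \<and> H \<noteq> K)"
      using minl s crit[OF fin sub] by blast
    obtain H K where HK: "(H, K) \<in> S" "H \<in> conj_class G I" "H \<noteq> K" using A[OF I] by blast
    have sHK: "s = (H, K)" using HK no by blast
    have Ic: "I \<subseteq> carrier G" using meet_irr_subset[OF I] .
    have "meet_irreducible G H" using cc_meet_irr[OF HK(2) I] .
    moreover have ccH: "conj_class G H = conj_class G I" using cc_eq[OF HK(2) Ic] .
    moreover have "s' = s" if s': "s' \<in> S" "conj_class G (fst s') = conj_class G (fst s)" for s'
    proof (rule ccontr)
      assume ne: "s' \<noteq> s"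
      obtain H2 K2 where s2: "s' = (H2, K2)" by (cases s')
      have "H2 \<in> conj_class G H2" using cc_self Hc s' s2 by blast
      then have "H2 \<in> conj_class G I" using s'(2) s2 sHK ccH by simp
      moreover have "H2 \<noteq> K2" using nid s' s2 by auto
      ultimately show False using no s' s2 ne by blast
    qed
    ultimately show ?thesis using sHK by auto
  qed
  have "bij_betw (\<lambda>s. conj_class G (fst s)) S (conj_class G ` {H. meet_irreducible G H})"
    unfolding bij_betw_def
  proof (intro conjI)
    show "inj_on (\<lambda>s. conj_class G (fst s)) S"
      unfolding inj_on_def using claim by metis
    show "(\<lambda>s. conj_class G (fst s)) ` S = conj_class G ` {H. meet_irreducible G H}"
    proof (intro equalityI subsetI)
      fix c assume "c \<in> (\<lambda>s. conj_class G (fst s)) ` S"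
      then show "c \<in> conj_class G ` {H. meet_irreducible G H}" using claim by auto
    next
      fix c assume "c \<in> conj_class G ` {H. meet_irreducible G H}"
      then obtain I where I: "meet_irreducible G I" "c = conj_class G I" by auto
      obtain H K where HK: "(H, K) \<in> S" "H \<in> conj_class G I" using A[OF I(1)] by blast
      have "conj_class G H = c" using cc_eq[OF HK(2) meet_irr_subset[OF I(1)]] I(2) by simp
      then show "c \<in> (\<lambda>s. conj_class G (fst s)) ` S" using HK(1) by force
    qed
  qed
  then show ?thesis by (rule bij_betw_same_card)
qed

end

theorem proposition4p5:
  fixes G :: "('a, 'b) monoid_scheme"
  assumes "group G" and "finite (carrier G)"
  shows "width G = card (conj_class G ` {H. meet_irreducible G H})
    \<and> (\<forall>R. R \<subseteq> {H. meet_irreducible G H}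
          \<and> (\<forall>H. meet_irreducible G H \<longrightarrow> (\<exists>!I. I \<in> R \<and> I \<in> conj_class G H))
          \<longrightarrow> minimal_generating_set G (complete_ts G) ((\<lambda>I. (I, carrier G)) ` R))"
proof -
  interpret group G by (rule assms(1))
  have fin: "finite (carrier G)" by (rule assms(2))
  have P2: "\<forall>R. R \<subseteq> {H. meet_irreducible G H}
          \<and> (\<forall>H. meet_irreducible G H \<longrightarrow> (\<exists>!I. I \<in> R \<and> I \<in> conj_class G H))
          \<longrightarrow> minimal_generating_set G (complete_ts G) ((\<lambda>I. (I, carrier G)) ` R)"
    using part2[OF fin] by blast
  define rep where "rep = (\<lambda>c::'a set set. SOME I. I \<in> c)"
  define R0 where "R0 = rep ` (conj_class G ` {H. meet_irreducible G H})"
  have repH: "rep (conj_class G H) \<in> conj_class G H" if "meet_irreducible G H" for H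
  proof -
    have "H \<in> conj_class G H" using cc_self meet_irr_subset[OF that] by auto
    then show ?thesis unfolding rep_def by (rule someI)
  qed
  have R0sub: "R0 \<subseteq> {H. meet_irreducible G H}"
    unfolding R0_def using repH cc_meet_irr by auto
  have R0u: "\<forall>H. meet_irreducible G H \<longrightarrow> (\<exists>!I. I \<in> R0 \<and> I \<in> conj_class G H)"
  proof (intro allI impI)
    fix H assume H: "meet_irreducible G H"
    have Hc: "H \<subseteq> carrier G" using meet_irr_subset[OF H] .
    have memR: "I = rep (conj_class G H)" if IR: "I \<in> R0" and IH: "I \<in> conj_class G H" for I
    proof -
      obtain H1 where H1: "meet_irreducible G H1" "I = rep (conj_class G H1)"
        using IR unfolding R0_def by auto
      have "I \<in> conj_class G H1" using repH[OF H1(1)] H1(2) by simp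
      then have "conj_class G H1 = conj_class G I"
        using cc_eq meet_irr_subset[OF H1(1)] by simp
      also have "\<dots> = conj_class G H" using cc_eq[OF IH Hc] .
      finally show ?thesis using H1(2) by simp
    qed
    have "rep (conj_class G H) \<in> R0" unfolding R0_def using H by auto
    then show "\<exists>!I. I \<in> R0 \<and> I \<in> conj_class G H" using repH[OF H] memR by blast
  qed
  have ex: "\<exists>S. minimal_generating_set G (complete_ts G) S"
    using P2 R0sub R0u by blast
  have "minimal_generating_set G (complete_ts G) (SOME S. minimal_generating_set G (complete_ts G) S)"
    using ex by (rule someI_ex)
  then have "width G = card (conj_class G ` {H. meet_irreducible G H})"
    unfolding width_def mgen_card_def using mgs_card[OF fin] by blast
  then show ?thesis using P2 by blast
qed

end
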